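(* Assume $|V|\ge 3$. Suppose the notion of strategic manipulation is weakened by removing requirement (a) (that the manipulated profile $(\vec s_{-C},\vec s'_C)$ be legal), keeping only requirement (b). Then for every $c\ge 1$ and $f\ge 1$ there is no $(c,f)$-resilient consensus protocol under this modified notion.
   Context: Model. There are $n$ agents $\Pi=\{1,\dots,n\}$ proceeding in synchronous rounds $1,2,\dots$. In each round every agent first chooses, for each agent $j$, a message to send to $j$ or no message; then it receives the messages sent to it in that round; then it updates its local state. Channels are reliable. A failure pattern $F$ is a subset of $\{(i,j,r): i,j\in\Pi, r\ge 1\}$, where $(i,j,r)\in F$ means that $i$'s round-$r$ message to $j$ would be delivered if sent; it must satisfy: if $(i,j,r)\notin F$ then $(i,j',r')\notin F$ for all $j'$ and all $r'>r$. Agent $i$ is correct if $(i,j,r)\in F$ for all $j,r$, and faulty otherwise; a faulty agent stops acting after it crashes. In a system with at most $f$ crash failures only failure patterns with at most $f$ faulty agents occur. $V$ is a finite set of proposal values; the private type $\theta_i$ of agent $i$ is a strict total order on $V$. A (deterministic) strategy $s_i$ maps $\theta_i$ to a function from (round $r$, messages received in rounds $1..r$) to (messages to send in round $r+1$, a decision in $V\cup\{\top\}$ or $\bot$ = no decision), $\top\notin V$; each agent decides at most once. A protocol is a profile $\vec s=(s_1,\dots,s_n)$; the run $R(F,\vec\theta,\vec s)$ is determined by $F$, $\vec\theta$, $\vec s$. Legal profile: for every admissible $F$ and every $\vec\theta$: Termination (every correct agent eventually decides), Uniform Agreement (no two agents decide differently), Validity (any decision is an element of $V$ that is the most preferred value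 of some agent). Utility of $i$: $0$ if $i$ crashes in $F$; if consensus holds with decision $d$, a positive value strictly increasing in $i$'s preference for $d$; $-\infty$ if consensus is violated. Colluders $C$ may use strategies depending on all colluders' types. Original definition: $C$ can strategically manipulate a legal $\vec s$ if there is $\vec s'_C$ with (a) $(\vec s_{-C},\vec s'_C)$ legal, and (b) some admissible $F$ and some $\vec\theta$ in which all members of $C$ have the same most preferred value, such that some $i\in C$ has strictly higher utility under $(\vec s_{-C},\vec s'_C)$ than under $\vec s$. A $(c,f)$-resilient consensus protocol is a legal profile that no group of size at most $c$ can strategically manipulate, in a system with at most $f$ crash failures. *)

theory Defs
  imports Main "HOL-Library.Extended_Real"
begin

text \<open>
  Agents are the natural numbers 0,...,n-1 (the paper's 1..n, shifted).
  Rounds are 1,2,...  A failure pattern is a set of triples (i,j,r):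
  (i,j,r) in F means that i's round-r message to j would be delivered if sent.
  A type (preference) is a strict total order on 'v; (x,y) in theta means
  that x is strictly preferred to y.
\<close>

datatype 'v dec = NoDec | TopDec | Val 'v
  (* NoDec = no decision (bot), TopDec = the special decision top (not in V) *)

type_synonym 'm hist = "(nat \<Rightarrow> 'm option) list"
  (* element k-1 of the list: messages received in round k, indexed by sender *)

type_synonym ('v,'m) local = "nat \<Rightarrow> 'm hist \<Rightarrow> (nat \<Rightarrow> 'm option) \<times> 'v dec"
  (* local function: (round r, messages received in rounds 1..r) \<mapsto>
     (messages to send in round r+1 indexed by receiver, decision) *)

type_synonym ('v,'m) strategy = "'v rel \<Rightarrow> ('v,'m) local"
type_synonym ('v,'m) profile = "nat \<Rightarrow> ('v,'m) strategy"
  (* colluders' strategies may depend on all colluders' types *)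
type_synonym ('v,'m) coalition_strategy = "nat \<Rightarrow> (nat \<Rightarrow> 'v rel) \<Rightarrow> ('v,'m) local"

definition pref_type :: "'v rel \<Rightarrow> bool" where
  "pref_type \<theta> \<longleftrightarrow> strict_linear_order \<theta>"

definition top_pref :: "'v rel \<Rightarrow> 'v" where
  "top_pref \<theta> = (THE v. \<forall>w. w \<noteq> v \<longrightarrow> (v, w) \<in> \<theta>)"

definition admissible :: "nat \<Rightarrow> nat \<Rightarrow> (nat \<times> nat \<times> nat) set \<Rightarrow> bool" where
  "admissible n f F \<longleftrightarrow>
     F \<subseteq> {(i, j, r). i < n \<and> j < n \<and> r \<ge> 1} \<and>
     (\<forall>i j r j' r'. i < n \<and> j < n \<and> j' < n \<and> r \<ge> 1 \<and> r < r' \<and> (i, j, r) \<notin> F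
         \<longrightarrow> (i, j', r') \<notin> F) \<and>
     card {i. i < n \<and> \<not> (\<forall>j r. j < n \<and> r \<ge> 1 \<longrightarrow> (i, j, r) \<in> F)} \<le> f"

definition correct :: "nat \<Rightarrow> (nat \<times> nat \<times> nat) set \<Rightarrow> nat \<Rightarrow> bool" where
  "correct n F i \<longleftrightarrow> (\<forall>j r. j < n \<and> r \<ge> 1 \<longrightarrow> (i, j, r) \<in> F)"

text \<open>A faulty agent crashing in round r
  sends its round-r messages (some of which are lost) and then stops.\<close>
definition acts :: "nat \<Rightarrow> (nat \<times> nat \<times> nat) set \<Rightarrow> nat \<Rightarrow> nat \<Rightarrow> bool" where
  "acts n F i r \<longleftrightarrow> (\<forall>r' j. 1 \<le> r' \<and> r' \<le> r \<and> j < n \<longrightarrow> (i, j, r') \<in> F)"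

text \<open>A message of j to i in round r+1 is delivered iff
  (j,i,r+1) in F; by the failure-pattern condition j has then not crashed before.\<close>
fun hist :: "nat \<Rightarrow> (nat \<Rightarrow> ('v,'m) local) \<Rightarrow> (nat \<times> nat \<times> nat) set \<Rightarrow> nat \<Rightarrow> nat \<Rightarrow> 'm hist" where
  "hist n P F 0 i = []"
| "hist n P F (Suc r) i = hist n P F r i @
     [\<lambda>j. if j < n \<and> (j, i, Suc r) \<in> F then fst (P j r (hist n P F r j)) i else None]"

definition decision :: "nat \<Rightarrow> (nat \<Rightarrow> ('v,'m) local) \<Rightarrow> (nat \<times> nat \<times> nat) set \<Rightarrow> nat \<Rightarrow> 'v dec" where
  "decision n P F i =
     (if \<exists>r. acts n F i r \<and> snd (P i r (hist n P F r i)) \<noteq> NoDec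
      then snd (P i (LEAST r. acts n F i r \<and> snd (P i r (hist n P F r i)) \<noteq> NoDec)
                  (hist n P F (LEAST r. acts n F i r \<and> snd (P i r (hist n P F r i)) \<noteq> NoDec) i))
      else NoDec)"

definition consensus :: "nat \<Rightarrow> (nat \<Rightarrow> ('v,'m) local) \<Rightarrow> (nat \<times> nat \<times> nat) set \<Rightarrow> (nat \<Rightarrow> 'v rel) \<Rightarrow> bool" where
  "consensus n P F \<theta> \<longleftrightarrow>
     (\<forall>i. i < n \<and> correct n F i \<longrightarrow> decision n P F i \<noteq> NoDec) \<and>
     (\<forall>i j. i < n \<and> j < n \<and> decision n P F i \<noteq> NoDec \<and> decision n P F j \<noteq> NoDec
        \<longrightarrow> decision n P F i = decision n P F j) \<and>
     (\<forall>i. i < n \<and> decision n P F i \<noteq> NoDec \<longrightarrow>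
        (\<exists>v k. decision n P F i = Val v \<and> k < n \<and> v = top_pref (\<theta> k)))"

definition local_of :: "('v,'m) profile \<Rightarrow> (nat \<Rightarrow> 'v rel) \<Rightarrow> nat \<Rightarrow> ('v,'m) local" where
  "local_of s \<theta> i = s i (\<theta> i)"

definition deviate_local :: "('v,'m) profile \<Rightarrow> nat set \<Rightarrow> ('v,'m) coalition_strategy
     \<Rightarrow> (nat \<Rightarrow> 'v rel) \<Rightarrow> nat \<Rightarrow> ('v,'m) local" where
  "deviate_local s C s' \<theta> i =
     (if i \<in> C then s' i (\<lambda>j. if j \<in> C then \<theta> j else {}) else s i (\<theta> i))"


definition legal_locals :: "nat \<Rightarrow> nat \<Rightarrow> ((nat \<Rightarrow> 'v rel) \<Rightarrow> nat \<Rightarrow> ('v,'m) local) \<Rightarrow> bool" where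
  "legal_locals n f L \<longleftrightarrow>
     (\<forall>F \<theta>. admissible n f F \<and> (\<forall>i. pref_type (\<theta> i)) \<longrightarrow> consensus n (L \<theta>) F \<theta>)"

definition legal_profile :: "nat \<Rightarrow> nat \<Rightarrow> ('v,'m) profile \<Rightarrow> bool" where
  "legal_profile n f s \<longleftrightarrow> legal_locals n f (local_of s)"

definition utility_ok :: "(nat \<Rightarrow> 'v rel \<Rightarrow> 'v \<Rightarrow> real) \<Rightarrow> bool" where
  "utility_ok u \<longleftrightarrow> (\<forall>i \<theta> v w. pref_type \<theta> \<longrightarrow> 0 < u i \<theta> v \<and> ((v, w) \<in> \<theta> \<longrightarrow> u i \<theta> w < u i \<theta> v))"

definition utility :: "nat \<Rightarrow> (nat \<Rightarrow> 'v rel \<Rightarrow> 'v \<Rightarrow> real) \<Rightarrow> (nat \<Rightarrow> ('v,'m) local)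
    \<Rightarrow> (nat \<times> nat \<times> nat) set \<Rightarrow> (nat \<Rightarrow> 'v rel) \<Rightarrow> nat \<Rightarrow> ereal" where
  "utility n u P F \<theta> i =
     (if \<not> correct n F i then 0
      else if consensus n P F \<theta> then
        (case decision n P F i of Val d \<Rightarrow> ereal (u i (\<theta> i) d) | _ \<Rightarrow> -\<infinity>)
      else -\<infinity>)"

definition weakly_manipulable :: "nat \<Rightarrow> nat \<Rightarrow> (nat \<Rightarrow> 'v rel \<Rightarrow> 'v \<Rightarrow> real)
    \<Rightarrow> ('v,'m) profile \<Rightarrow> nat set \<Rightarrow> bool" where
  "weakly_manipulable n f u s C \<longleftrightarrow>
     (\<exists>s' :: ('v,'m) coalition_strategy. \<exists>F \<theta>.
        admissible n f F \<and> (\<forall>i. pref_type (\<theta> i)) \<and>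
        (\<forall>i\<in>C. \<forall>j\<in>C. top_pref (\<theta> i) = top_pref (\<theta> j)) \<and>
        (\<exists>i\<in>C. utility n u (local_of s \<theta>) F \<theta> i
                 < utility n u (deviate_local s C s' \<theta>) F \<theta> i))"

definition weakly_resilient :: "nat \<Rightarrow> nat \<Rightarrow> nat \<Rightarrow> (nat \<Rightarrow> 'v rel \<Rightarrow> 'v \<Rightarrow> real)
    \<Rightarrow> ('v,'m) profile \<Rightarrow> bool" where
  "weakly_resilient n c f u s \<longleftrightarrow>
     legal_profile n f s \<and>
     (\<forall>C. C \<subseteq> {..<n} \<and> card C \<le> c \<longrightarrow> \<not> weakly_manipulable n f u s C)"

end

theory Submission
  imports Defs
begin


lemma hist_eq:
  fixes P1 P2 :: "nat \<Rightarrow> ('v,'m) local"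
  assumes F: "\<And>t k x. t < T \<Longrightarrow> k \<in> A \<Longrightarrow> x < n \<Longrightarrow> (x,k,Suc t) \<in> F1 \<longleftrightarrow> (x,k,Suc t) \<in> F2"
  and M: "\<And>t k x. t < T \<Longrightarrow> k \<in> A \<Longrightarrow> x < n \<Longrightarrow> (x,k,Suc t) \<in> F1 \<Longrightarrow>
     (\<And>k'. k' \<in> A \<Longrightarrow> hist n P1 F1 t k' = hist n P2 F2 t k') \<Longrightarrow>
     fst (P1 x t (hist n P1 F1 t x)) k = fst (P2 x t (hist n P2 F2 t x)) k"
  shows "t \<le> T \<Longrightarrow> k \<in> A \<Longrightarrow> hist n P1 F1 t k = hist n P2 F2 t k"
proof (induction t arbitrary: k)
  case 0 then show ?case by simp
next
  case (Suc t)
  have IH: "\<And>k'. k' \<in> A \<Longrightarrow> hist n P1 F1 t k' = hist n P2 F2 t k'" using Suc by simp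
  have "t < T" using Suc by simp
  show ?case
    using IH[OF Suc.prems(2)] F[OF \<open>t<T\<close> Suc.prems(2)] M[OF \<open>t<T\<close> Suc.prems(2) _ _ IH]
    by (auto intro!: ext)
qed

lemma decision_eq:
  assumes "\<And>t. acts n F1 k t = acts n F2 k t"
    and "\<And>t. snd (P1 k t (hist n P1 F1 t k)) = snd (P2 k t (hist n P2 F2 t k))"
  shows "decision n P1 F1 k = decision n P2 F2 k"
  unfolding decision_def assms(1) assms(2) ..

lemma decision_eq_upto:
  assumes "\<And>t. t \<le> tz \<Longrightarrow> acts n F1 k t = acts n F2 k t"
    and "\<And>t. t \<le> tz \<Longrightarrow> snd (P1 k t (hist n P1 F1 t k)) = snd (P2 k t (hist n P2 F2 t k))"
    and "acts n F1 k tz" and "snd (P1 k tz (hist n P1 F1 tz k)) \<noteq> NoDec"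
  shows "decision n P1 F1 k = decision n P2 F2 k"
proof -
  define p1 where "p1 t \<longleftrightarrow> acts n F1 k t \<and> snd (P1 k t (hist n P1 F1 t k)) \<noteq> NoDec" for t
  define p2 where "p2 t \<longleftrightarrow> acts n F2 k t \<and> snd (P2 k t (hist n P2 F2 t k)) \<noteq> NoDec" for t
  have eq: "t \<le> tz \<Longrightarrow> p1 t \<longleftrightarrow> p2 t" for t using assms(1,2) unfolding p1_def p2_def by simp
  have e1: "p1 tz" using assms(3,4) p1_def by simp
  have e2: "p2 tz" using eq e1 by simp
  have l1: "Least p1 \<le> tz" using e1 by (rule Least_le)
  have lp: "p1 (Least p1)" using e1 by (rule LeastI)
  have L: "Least p2 = Least p1"
  proof (rule Least_equality)
    show "p2 (Least p1)" using eq l1 lp by simp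
    fix y assume "p2 y"
    show "Least p1 \<le> y"
    proof (cases "y \<le> tz")
      case True then show ?thesis using eq \<open>p2 y\<close> by (simp add: Least_le)
    next
      case False then show ?thesis using l1 by simp
    qed
  qed
  have "decision n P1 F1 k = snd (P1 k (Least p1) (hist n P1 F1 (Least p1) k))"
    unfolding decision_def p1_def[symmetric] using e1 by auto
  moreover have "decision n P2 F2 k = snd (P2 k (Least p2) (hist n P2 F2 (Least p2) k))"
    unfolding decision_def p2_def[symmetric] using e2 by auto
  ultimately show ?thesis using L l1 assms(2) by simp
qed



definition Q :: "nat \<Rightarrow> nat \<Rightarrow> nat \<Rightarrow> nat set \<Rightarrow> (nat \<times> nat \<times> nat) set" where
  "Q n j r S = {(a,b,t). a<n \<and> b<n \<and> 1\<le>t \<and> (a\<noteq>j \<or> t<r \<or> (t=r \<and> b\<in>S))}"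

definition F0 :: "nat \<Rightarrow> (nat \<times> nat \<times> nat) set" where
  "F0 n = {(a,b,t). a<n \<and> b<n \<and> 1\<le>t}"

lemma correct_Q:
  assumes j: "j < n" shows "correct n (Q n j r S) k \<longleftrightarrow> k < n \<and> k \<noteq> j"
proof
  assume c: "correct n (Q n j r S) k"
  have "(k, j, Suc r) \<in> Q n j r S" using c j unfolding correct_def by simp
  then show "k < n \<and> k \<noteq> j" unfolding Q_def by auto
next
  assume "k < n \<and> k \<noteq> j"
  then show "correct n (Q n j r S) k" unfolding correct_def Q_def by auto
qed

lemma correct_F0: "0 < n \<Longrightarrow> correct n (F0 n) k \<longleftrightarrow> k < n"
  unfolding correct_def F0_def by auto

lemma admissible_Q: "j < n \<Longrightarrow> 1 \<le> f \<Longrightarrow> admissible n f (Q n j r S)"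
proof -
  assume j: "j < n" and f: "1 \<le> f"
  have s: "{i. i < n \<and> \<not> (\<forall>j' r'. j' < n \<and> r' \<ge> 1 \<longrightarrow> (i, j', r') \<in> Q n j r S)} \<subseteq> {j}"
    unfolding Q_def by auto
  have "card {i. i < n \<and> \<not> (\<forall>j' r'. j' < n \<and> r' \<ge> 1 \<longrightarrow> (i, j', r') \<in> Q n j r S)} \<le> card {j}"
    by (rule card_mono[OF _ s]) simp
  then have c: "card {i. i < n \<and> \<not> (\<forall>j' r'. j' < n \<and> r' \<ge> 1 \<longrightarrow> (i, j', r') \<in> Q n j r S)} \<le> f"
    using f by simp
  have a1: "Q n j r S \<subseteq> {(i, j, r). i < n \<and> j < n \<and> r \<ge> 1}" unfolding Q_def by auto
  have a2: "\<forall>i j0 r0 j' r'. i < n \<and> j0 < n \<and> j' < n \<and> r0 \<ge> 1 \<and> r0 < r' \<and> (i, j0, r0) \<notin> Q n j r S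
         \<longrightarrow> (i, j', r') \<notin> Q n j r S"
  proof (intro allI impI)
    fix i j0 r0 j' r'
    assume h: "i < n \<and> j0 < n \<and> j' < n \<and> r0 \<ge> 1 \<and> r0 < r' \<and> (i, j0, r0) \<notin> Q n j r S"
    then have "i = j" "r \<le> r0" unfolding Q_def by auto
    then show "(i, j', r') \<notin> Q n j r S" using h unfolding Q_def by auto
  qed
  show ?thesis unfolding admissible_def using a1 a2 c by blast
qed

lemma admissible_F0: "admissible n f (F0 n)"
proof -
  have e: "{i. i < n \<and> \<not> (\<forall>j' r'. j' < n \<and> r' \<ge> 1 \<longrightarrow> (i, j', r') \<in> F0 n)} = {}"
    unfolding F0_def by auto
  show ?thesis unfolding admissible_def e by (auto simp: F0_def)
qed

lemma acts_Q_eq: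
  assumes "j < n" "j \<notin> S1" "j \<notin> S2"
  shows "acts n (Q n j r S1) k t = acts n (Q n j r S2) k t"
proof (cases "k = j \<and> r \<le> t \<and> 1 \<le> r")
  case True
  have "(j, j, r) \<notin> Q n j r S1" "(j, j, r) \<notin> Q n j r S2" using assms unfolding Q_def by auto
  then have "\<not> acts n (Q n j r S1) k t" "\<not> acts n (Q n j r S2) k t"
    using True assms(1) unfolding acts_def by blast+
  then show ?thesis by simp
next
  case False
  have "(k, b, r') \<in> Q n j r S1 \<longleftrightarrow> (k, b, r') \<in> Q n j r S2" if "1 \<le> r'" "r' \<le> t" for b r'
    using False that unfolding Q_def by auto
  then show ?thesis unfolding acts_def by blast
qed

lemma exists_type:
  fixes a :: "'v::finite"
  shows "\<exists>\<theta>. pref_type \<theta> \<and> top_pref \<theta> = a"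
proof -
  obtain g :: "'v \<Rightarrow> nat" and m where "g ` UNIV = {..<m}" "inj_on g UNIV"
    using finite_imp_inj_to_nat_seg[OF finite_UNIV[where 'a='v]] by blast
  then have ig: "inj g" by simp
  define rk where "rk x = (if x = a then 0 else Suc (g x))" for x
  have rinj: "rk x = rk y \<Longrightarrow> x = y" for x y
    unfolding rk_def using ig by (auto split: if_splits simp: inj_eq)
  define \<theta> where "\<theta> = {(x,y). rk x < rk y}"
  have p: "pref_type \<theta>"
    unfolding pref_type_def strict_linear_order_on_def
  proof (intro conjI)
    show "trans \<theta>" unfolding \<theta>_def trans_def by auto
    show "irrefl \<theta>" unfolding \<theta>_def irrefl_def by auto
    show "total_on UNIV \<theta>" unfolding \<theta>_def total_on_def
    proof (intro ballI impI)
      fix x y :: 'v assume "x \<noteq> y"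
      then have "rk x \<noteq> rk y" using rinj by blast
      then show "(x, y) \<in> {(x, y). rk x < rk y} \<or> (y, x) \<in> {(x, y). rk x < rk y}" by auto
    qed
  qed
  have top: "\<forall>w. w \<noteq> a \<longrightarrow> (a, w) \<in> \<theta>" unfolding \<theta>_def rk_def by auto
  have "top_pref \<theta> = a"
    unfolding top_pref_def
  proof (rule the_equality)
    show "\<forall>w. w \<noteq> a \<longrightarrow> (a, w) \<in> \<theta>" by (rule top)
    fix v assume h: "\<forall>w. w \<noteq> v \<longrightarrow> (v, w) \<in> \<theta>"
    show "v = a"
    proof (rule ccontr)
      assume "v \<noteq> a"
      with h have "(v, a) \<in> \<theta>" by auto
      then show False unfolding \<theta>_def rk_def by auto
    qed
  qed
  with p show ?thesis by blast
qed



locale setting =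
  fixes n c f :: nat and u :: "nat \<Rightarrow> ('v::finite) rel \<Rightarrow> 'v \<Rightarrow> real" and s :: "('v,'m) profile"
  assumes n2: "n \<ge> 2" and c1: "c \<ge> 1" and f1: "f \<ge> 1" and uok: "utility_ok u"
    and legal: "legal_profile n f s"
    and nm: "\<And>C. C \<subseteq> {..<n} \<Longrightarrow> card C \<le> c \<Longrightarrow> \<not> weakly_manipulable n f u s C"
begin

lemma cons: "admissible n f F \<Longrightarrow> \<forall>i. pref_type (\<theta> i) \<Longrightarrow> consensus n (local_of s \<theta>) F \<theta>"
  using legal unfolding legal_profile_def legal_locals_def by blast

lemma agree:
  assumes "admissible n f F" "\<forall>i. pref_type (\<theta> i)" "a < n" "b < n" "correct n F a" "correct n F b"
  shows "decision n (local_of s \<theta>) F a = decision n (local_of s \<theta>) F b"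
  using cons[OF assms(1,2)] assms(3-6) unfolding consensus_def by blast

lemma util_val:
  assumes "admissible n f F" "\<forall>i. pref_type (\<theta> i)" "k < n" "correct n F k"
  shows "\<exists>d. decision n (local_of s \<theta>) F k = Val d \<and>
             utility n u (local_of s \<theta>) F \<theta> k = ereal (u k (\<theta> k) d)"
proof -
  have C: "consensus n (local_of s \<theta>) F \<theta>" using cons[OF assms(1,2)] .
  then have "decision n (local_of s \<theta>) F k \<noteq> NoDec" using assms(3,4) unfolding consensus_def by blast
  then obtain d where d: "decision n (local_of s \<theta>) F k = Val d"
    using C assms(3) unfolding consensus_def by blast
  then show ?thesis using C assms(4) unfolding utility_def by simp
qed

lemma dev:
  assumes "admissible n f F1" "admissible n f F2"
    and mem: "\<And>x y t. y \<noteq> i \<Longrightarrow> (x,y,t) \<in> F1 \<longleftrightarrow> (x,y,t) \<in> F2"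
    and act: "\<And>k t. acts n F1 k t = acts n F2 k t"
    and cor: "\<And>k. correct n F1 k = correct n F2 k"
    and i: "i < n" and th: "\<forall>k. pref_type (\<theta> k)"
  shows "\<not> (utility n u (local_of s \<theta>) F1 \<theta> i < utility n u (local_of s \<theta>) F2 \<theta> i)"
proof
  assume lt: "utility n u (local_of s \<theta>) F1 \<theta> i < utility n u (local_of s \<theta>) F2 \<theta> i"
  define L where "L = local_of s \<theta>"
  define s' :: "('v,'m) coalition_strategy" where "s' = (\<lambda>_ _ t h. L i t (hist n L F2 t i))"
  define P1 where "P1 = deviate_local s {i} s' \<theta>"
  have P1o: "\<And>k. k \<noteq> i \<Longrightarrow> P1 k = L k" by (simp add: P1_def deviate_local_def L_def local_of_def)
  have P1i: "P1 i = (\<lambda>t h. L i t (hist n L F2 t i))" by (simp add: P1_def deviate_local_def s'_def)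
  have H: "hist n P1 F1 t k = hist n L F2 t k" if "k \<noteq> i" for t k
  proof (rule hist_eq[where T=t and A="-{i}"])
    show "(x, k, Suc t') \<in> F1 \<longleftrightarrow> (x, k, Suc t') \<in> F2" if "t' < t" "k \<in> - {i}" "x < n" for t' k x
      using mem that by simp
    show "fst (P1 x t' (hist n P1 F1 t' x)) k = fst (L x t' (hist n L F2 t' x)) k"
      if "t' < t" "k \<in> - {i}" "x < n" "(x, k, Suc t') \<in> F1"
        "\<And>k'. k' \<in> - {i} \<Longrightarrow> hist n P1 F1 t' k' = hist n L F2 t' k'" for t' k x
    proof (cases "x = i")
      case True then show ?thesis using P1i by simp
    next
      case False then show ?thesis using P1o that(5)[of x] by simp
    qed
  qed (use that in auto)
  have S: "snd (P1 k t (hist n P1 F1 t k)) = snd (L k t (hist n L F2 t k))" for k t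
  proof (cases "k = i")
    case True then show ?thesis using P1i by simp
  next
    case False then show ?thesis using P1o H by simp
  qed
  have D: "decision n P1 F1 k = decision n L F2 k" for k
    by (rule decision_eq) (use act S in auto)
  have Cn: "consensus n P1 F1 \<theta> = consensus n L F2 \<theta>"
    unfolding consensus_def D cor ..
  have U: "utility n u P1 F1 \<theta> i = utility n u L F2 \<theta> i"
    unfolding utility_def D Cn cor ..
  have "weakly_manipulable n f u s {i}"
    unfolding weakly_manipulable_def
    apply (rule exI[where x=s'], rule exI[where x=F1], rule exI[where x=\<theta>])
    using assms(1) th lt U unfolding P1_def L_def by auto
  moreover have "\<not> weakly_manipulable n f u s {i}" using nm[of "{i}"] i c1 by auto
  ultimately show False by simp
qed

lemma dec_eq_dev:
  assumes "admissible n f F1" "admissible n f F2"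
    and mem: "\<And>x y t. y \<noteq> i \<Longrightarrow> (x,y,t) \<in> F1 \<longleftrightarrow> (x,y,t) \<in> F2"
    and act: "\<And>k t. acts n F1 k t = acts n F2 k t"
    and cor: "\<And>k. correct n F1 k = correct n F2 k"
    and i: "i < n" and th: "\<forall>k. pref_type (\<theta> k)" and ci: "correct n F1 i"
  shows "decision n (local_of s \<theta>) F1 i = decision n (local_of s \<theta>) F2 i"
proof -
  have n1: "\<not> (utility n u (local_of s \<theta>) F1 \<theta> i < utility n u (local_of s \<theta>) F2 \<theta> i)"
    by (rule dev) (use assms in auto)
  have n2: "\<not> (utility n u (local_of s \<theta>) F2 \<theta> i < utility n u (local_of s \<theta>) F1 \<theta> i)"
    by (rule dev) (use assms in auto)
  obtain d1 where d1: "decision n (local_of s \<theta>) F1 i = Val d1"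
    "utility n u (local_of s \<theta>) F1 \<theta> i = ereal (u i (\<theta> i) d1)"
    using util_val[OF assms(1) th i ci] by blast
  obtain d2 where d2: "decision n (local_of s \<theta>) F2 i = Val d2"
    "utility n u (local_of s \<theta>) F2 \<theta> i = ereal (u i (\<theta> i) d2)"
    using util_val[OF assms(2) th i] ci cor by blast
  have eq: "u i (\<theta> i) d1 = u i (\<theta> i) d2" using n1 n2 d1 d2 by auto
  have "d1 = d2"
  proof (rule ccontr)
    assume "d1 \<noteq> d2"
    then have "(d1, d2) \<in> \<theta> i \<or> (d2, d1) \<in> \<theta> i"
      using th unfolding pref_type_def strict_linear_order_on_def total_on_def by blast
    moreover have m: "\<And>v w. (v,w) \<in> \<theta> i \<Longrightarrow> u i (\<theta> i) w < u i (\<theta> i) v"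
      using uok th unfolding utility_ok_def by blast
    ultimately show False using eq by (metis less_irrefl)
  qed
  then show ?thesis using d1 d2 by simp
qed

lemma step1:
  assumes th: "\<forall>k. pref_type (\<theta> k)" and j: "j < n" and k0: "k0 < n" "k0 \<noteq> j"
    and i: "i < n" "i \<noteq> j" and jS: "j \<notin> S"
  shows "decision n (local_of s \<theta>) (Q n j r (insert i S)) k0 = decision n (local_of s \<theta>) (Q n j r S) k0"
proof -
  have a1: "admissible n f (Q n j r (insert i S))" using admissible_Q j f1 by blast
  have a2: "admissible n f (Q n j r S)" using admissible_Q j f1 by blast
  have "decision n (local_of s \<theta>) (Q n j r (insert i S)) i = decision n (local_of s \<theta>) (Q n j r S) i"
  proof (rule dec_eq_dev[OF a1 a2])
    show "(x, y, t) \<in> Q n j r (insert i S) \<longleftrightarrow> (x, y, t) \<in> Q n j r S" if "y \<noteq> i" for x y t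
      using that unfolding Q_def by auto
    show "acts n (Q n j r (insert i S)) k t = acts n (Q n j r S) k t" for k t
      by (rule acts_Q_eq) (use j jS i in auto)
    show "correct n (Q n j r (insert i S)) k = correct n (Q n j r S) k" for k
      using correct_Q[OF j] by simp
    show "correct n (Q n j r (insert i S)) i" using correct_Q[OF j] i by simp
  qed (use i th in auto)
  moreover have "decision n (local_of s \<theta>) (Q n j r (insert i S)) k0 = decision n (local_of s \<theta>) (Q n j r (insert i S)) i"
    by (rule agree[OF a1 th]) (use k0 i correct_Q[OF j] in auto)
  moreover have "decision n (local_of s \<theta>) (Q n j r S) k0 = decision n (local_of s \<theta>) (Q n j r S) i"
    by (rule agree[OF a2 th]) (use k0 i correct_Q[OF j] in auto)
  ultimately show ?thesis by simp
qed

lemma step2: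
  assumes th: "\<forall>k. pref_type (\<theta> k)" and j: "j < n" and k0: "k0 < n" "k0 \<noteq> j"
  shows "decision n (local_of s \<theta>) (Q n j r {}) k0 = decision n (local_of s \<theta>) (Q n j r {x. x < n \<and> x \<noteq> j}) k0"
proof -
  have "decision n (local_of s \<theta>) (Q n j r {}) k0 = decision n (local_of s \<theta>) (Q n j r {x. x < m \<and> x < n \<and> x \<noteq> j}) k0" for m
  proof (induction m)
    case 0 then show ?case by simp
  next
    case (Suc m)
    show ?case
    proof (cases "m < n \<and> m \<noteq> j")
      case True
      have e: "{x. x < Suc m \<and> x < n \<and> x \<noteq> j} = insert m {x. x < m \<and> x < n \<and> x \<noteq> j}"
        using True by auto
      show ?thesis unfolding e using Suc step1[OF th j k0, of m "{x. x < m \<and> x < n \<and> x \<noteq> j}" r] True by simp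
    next
      case False
      then have e: "{x. x < Suc m \<and> x < n \<and> x \<noteq> j} = {x. x < m \<and> x < n \<and> x \<noteq> j}"
        by auto
      show ?thesis unfolding e using Suc by simp
    qed
  qed
  from this[of n] show ?thesis by simp
qed

lemma step3:
  assumes th: "\<forall>k. pref_type (\<theta> k)" and j: "j < n" and k0: "k0 \<noteq> j"
  shows "decision n (local_of s \<theta>) (Q n j r {x. x < n \<and> x \<noteq> j}) k0 = decision n (local_of s \<theta>) (Q n j (Suc r) {}) k0"
proof -
  define F1 where "F1 = Q n j r {x. x < n \<and> x \<noteq> j}"
  define F2 where "F2 = Q n j (Suc r) {}"
  define L where "L = local_of s \<theta>"
  have key: "(a,b,t) \<in> F1 \<longleftrightarrow> (a,b,t) \<in> F2" if "b \<noteq> j \<or> t \<noteq> r" for a b t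
    using that unfolding F1_def F2_def Q_def by auto
  have key2: "(a,b,t) \<in> F1 \<longleftrightarrow> (a,b,t) \<in> F2" if "a \<noteq> j" for a b t
    using that unfolding F1_def F2_def Q_def by auto
  have ph1: "hist n L F1 t k = hist n L F2 t k" if "t \<le> r - 1" for t k
  proof (rule hist_eq[where T="r - 1" and A=UNIV])
    show "(x, k, Suc t') \<in> F1 \<longleftrightarrow> (x, k, Suc t') \<in> F2" if "t' < r - 1" for t' k x
    proof -
      have "Suc t' \<noteq> r" using that by linarith
      then show ?thesis using key[where a=x and b=k and t="Suc t'"] by blast
    qed
  qed (use that in auto)
  have ph2: "hist n L F1 t k = hist n L F2 t k" if "k \<noteq> j" for t k
  proof (rule hist_eq[where T=t and A="-{j}"])
    show "(x, k, Suc t') \<in> F1 \<longleftrightarrow> (x, k, Suc t') \<in> F2" if "k \<in> -{j}" for t' k x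
      using that key by simp
    show "fst (L x t' (hist n L F1 t' x)) k = fst (L x t' (hist n L F2 t' x)) k"
      if "t' < t" "k \<in> - {j}" "x < n" "(x, k, Suc t') \<in> F1"
        "\<And>k'. k' \<in> - {j} \<Longrightarrow> hist n L F1 t' k' = hist n L F2 t' k'" for t' k x
    proof (cases "x = j")
      case True
      then have "Suc t' \<le> r" using that(4) unfolding F1_def Q_def by auto
      then show ?thesis using ph1[of t' x] by simp
    next
      case False then show ?thesis using that(5)[of x] by simp
    qed
  qed (use that in auto)
  have "decision n L F1 k0 = decision n L F2 k0"
  proof (rule decision_eq)
    show "acts n F1 k0 t = acts n F2 k0 t" for t
      unfolding acts_def using key2 k0 by simp
    show "snd (L k0 t (hist n L F1 t k0)) = snd (L k0 t (hist n L F2 t k0))" for t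
      using ph2 k0 by simp
  qed
  then show ?thesis unfolding F1_def F2_def L_def .
qed

lemma step4:
  assumes th: "\<forall>k. pref_type (\<theta> k)" and j: "j < n" and k0: "k0 < n" "k0 \<noteq> j"
  shows "decision n (local_of s \<theta>) (Q n j 0 {}) k0 = decision n (local_of s \<theta>) (Q n j r {}) k0"
proof (induction r)
  case (Suc r) then show ?case using step2[OF th j k0, of r] step3[OF th j k0(2), of r] by simp
qed simp

lemma step5:
  assumes th: "\<forall>k. pref_type (\<theta> k)" and j: "j < n" and k0: "k0 < n" "k0 \<noteq> j"
  shows "\<exists>R. decision n (local_of s \<theta>) (F0 n) k0 = decision n (local_of s \<theta>) (Q n j R {}) k0"
proof -
  define L where "L = local_of s \<theta>"
  have "n > 0" using n2 by simp
  have "decision n L (F0 n) k0 \<noteq> NoDec"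
    using cons[OF admissible_F0 th] k0 correct_F0[OF \<open>n>0\<close>] unfolding consensus_def L_def by blast
  then obtain t0 where t0: "acts n (F0 n) k0 t0" "snd (L k0 t0 (hist n L (F0 n) t0 k0)) \<noteq> NoDec"
    unfolding decision_def by (auto split: if_splits)
  define F2 where "F2 = Q n j (Suc t0) {}"
  have key: "(a,b,t) \<in> F0 n \<longleftrightarrow> (a,b,t) \<in> F2" if "a \<noteq> j \<or> t \<le> t0" for a b t
    using that unfolding F0_def F2_def Q_def by auto
  have H: "hist n L (F0 n) t k = hist n L F2 t k" if "t \<le> t0" for t k
  proof (rule hist_eq[where T=t0 and A=UNIV])
    show "(x, k, Suc t') \<in> F0 n \<longleftrightarrow> (x, k, Suc t') \<in> F2" if "t' < t0" for t' k x
      using that key by simp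
  qed (use that in auto)
  have "decision n L (F0 n) k0 = decision n L F2 k0"
  proof (rule decision_eq_upto[where tz=t0])
    show "acts n (F0 n) k0 t = acts n F2 k0 t" for t
      unfolding acts_def using key k0 by simp
    show "snd (L k0 t (hist n L (F0 n) t k0)) = snd (L k0 t (hist n L F2 t k0))" if "t \<le> t0" for t
      using H that by simp
  qed (use t0 in auto)
  then show ?thesis unfolding L_def F2_def by blast
qed

lemma step6:
  assumes j: "j < n" and k0: "k0 \<noteq> j"
  shows "decision n (local_of s \<theta>) (Q n j 0 {}) k0 = decision n (local_of s (\<theta>(j := t))) (Q n j 0 {}) k0"
proof -
  have nm: "(j, b, t') \<notin> Q n j 0 {}" for b t' unfolding Q_def by auto
  have H: "hist n (local_of s \<theta>) (Q n j 0 {}) t' k = hist n (local_of s (\<theta>(j := t))) (Q n j 0 {}) t' k"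
    if "k \<noteq> j" for t' k
  proof (rule hist_eq[where T=t' and A="-{j}"])
    show "fst (local_of s \<theta> x t'' (hist n (local_of s \<theta>) (Q n j 0 {}) t'' x)) k =
          fst (local_of s (\<theta>(j := t)) x t'' (hist n (local_of s (\<theta>(j := t))) (Q n j 0 {}) t'' x)) k"
      if "t'' < t'" "k \<in> - {j}" "x < n" "(x, k, Suc t'') \<in> Q n j 0 {}"
        "\<And>k'. k' \<in> - {j} \<Longrightarrow> hist n (local_of s \<theta>) (Q n j 0 {}) t'' k' = hist n (local_of s (\<theta>(j := t))) (Q n j 0 {}) t'' k'"
      for t'' k x
    proof -
      have "x \<noteq> j" using that(4) nm by auto
      then show ?thesis using that(5)[of x] by (simp add: local_of_def)
    qed
  qed (use that in auto)
  show ?thesis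
    by (rule decision_eq) (use H k0 in \<open>auto simp: local_of_def\<close>)
qed

lemma indep:
  assumes th: "\<forall>k. pref_type (\<theta> k)" and t: "pref_type t" and j: "j < n"
  shows "decision n (local_of s \<theta>) (F0 n) 0 = decision n (local_of s (\<theta>(j := t))) (F0 n) 0"
proof -
  define k0 where "k0 = (if j = 0 then 1 else (0::nat))"
  have k0: "k0 < n" "k0 \<noteq> j" using n2 unfolding k0_def by auto
  have th': "\<forall>k. pref_type ((\<theta>(j := t)) k)" using th t by simp
  have n0: "0 < n" using n2 by simp
  have e1: "decision n (local_of s \<theta>) (F0 n) 0 = decision n (local_of s \<theta>) (F0 n) k0"
    by (rule agree[OF admissible_F0 th]) (use k0 n0 correct_F0[OF n0] in auto)
  have e2: "decision n (local_of s (\<theta>(j := t))) (F0 n) 0 = decision n (local_of s (\<theta>(j := t))) (F0 n) k0"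
    by (rule agree[OF admissible_F0 th']) (use k0 n0 correct_F0[OF n0] in auto)
  obtain R where R: "decision n (local_of s \<theta>) (F0 n) k0 = decision n (local_of s \<theta>) (Q n j R {}) k0"
    using step5[OF th j k0] by blast
  obtain R' where R': "decision n (local_of s (\<theta>(j := t))) (F0 n) k0 = decision n (local_of s (\<theta>(j := t))) (Q n j R' {}) k0"
    using step5[OF th' j k0] by blast
  note s4 = step4[OF th j k0, of R] and s4' = step4[OF th' j k0, of R'] and s6 = step6[OF j k0(2), of \<theta> t]
  have "decision n (local_of s \<theta>) (F0 n) 0 = decision n (local_of s \<theta>) (Q n j R {}) k0"
    using e1 R by (rule trans)
  also have "\<dots> = decision n (local_of s \<theta>) (Q n j 0 {}) k0" using s4 by (rule sym)
  also have "\<dots> = decision n (local_of s (\<theta>(j := t))) (Q n j 0 {}) k0" by (rule s6)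
  also have "\<dots> = decision n (local_of s (\<theta>(j := t))) (Q n j R' {}) k0" by (rule s4')
  also have "\<dots> = decision n (local_of s (\<theta>(j := t))) (F0 n) 0" by (rule trans[OF sym[OF R'] sym[OF e2]])
  finally show ?thesis .
qed

end

theorem proposition2:
  fixes n c f :: nat
    and u :: "nat \<Rightarrow> ('v::finite) rel \<Rightarrow> 'v \<Rightarrow> real"
  assumes "card (UNIV :: 'v set) \<ge> 3"
    and "n \<ge> 2"
    and "c \<ge> 1"
    and "f \<ge> 1"
    and "utility_ok u"
  shows "\<not> (\<exists>s :: ('v, 'm) profile. weakly_resilient n c f u s)"
proof
  assume "\<exists>s :: ('v, 'm) profile. weakly_resilient n c f u s"
  then obtain s :: "('v, 'm) profile" where w: "weakly_resilient n c f u s" by blast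
  interpret setting n c f u s
    using w assms(2-5) unfolding weakly_resilient_def by unfold_locales auto
  fix a :: 'v
  have "(UNIV :: 'v set) \<noteq> {a}"
  proof
    assume h: "(UNIV :: 'v set) = {a}"
    have "card (UNIV :: 'v set) = card {a}" by (simp only: h)
    then have "card (UNIV :: 'v set) = 1" by simp
    then show False using assms(1) by simp
  qed
  then obtain b :: 'v where ba: "b \<noteq> a" by (auto simp: set_eq_iff)
  then have ab: "a \<noteq> b" by simp
  obtain ta where ta: "pref_type ta" "top_pref ta = a" using exists_type by blast
  obtain tb where tb: "pref_type tb" "top_pref tb = b" using exists_type by blast
  define th :: "nat \<Rightarrow> nat \<Rightarrow> 'v rel" where "th m = (\<lambda>k. if k < m then tb else ta)" for m
  have thp: "\<forall>k. pref_type (th m k)" for m using ta tb unfolding th_def by simp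
  define D where "D m = decision n (local_of s (th m)) (F0 n) 0" for m
  have n0: "0 < n" using assms(2) by simp
  have val: "\<exists>k<n. D m = Val (top_pref (th m k))" for m
  proof -
    have C: "consensus n (local_of s (th m)) (F0 n) (th m)" using cons[OF admissible_F0 thp] .
    then have "D m \<noteq> NoDec" using n0 correct_F0[OF n0] unfolding consensus_def D_def by blast
    then show ?thesis using C n0 unfolding consensus_def D_def by blast
  qed
  have D0: "D 0 = Val a" using val[of 0] ta unfolding th_def by auto
  have Dn: "D n = Val b" using val[of n] tb unfolding th_def by auto
  have step: "D (Suc m) = D m" if "m < n" for m
  proof -
    have "th (Suc m) = (th m)(m := tb)" unfolding th_def by (simp add: fun_eq_iff)
    then show ?thesis unfolding D_def using indep[OF thp tb(1) that, of m] by simp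
  qed
  have "m \<le> n \<Longrightarrow> D m = D 0" for m
    by (induction m) (use step in auto)
  from this[of n] have "D n = D 0" by simp
  then show False using D0 Dn ab by simp
qed

end
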